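(* Let $(X,T),(Y,S)$ be $1$-step shifts of finite type over a finite alphabet $\mathcal{A}$, let $F:\mathcal{A}^2\to\mathbb{R}$ and $f(x,y)=F(x(0),y(0))$. Let $(C_n)_{n\ge1}$ be a non-increasing sequence of nonnegative reals converging to $C$. Then $Y_{f,C}=\bigcap_{n\ge1}Y_{f,C_n}$. In particular, if $Y_{f,C_n}\neq\emptyset$ for all $n$, then $Y_{f,C}\neq\emptyset$.
   Context: $\mathcal{A}^{\mathbb{Z}}$ carries the product of discrete topologies and the left shift $(Tx)(j)=x(j+1)$. A shift is a nonempty compact $X\subseteq\mathcal{A}^{\mathbb{Z}}$ with $TX=X$; it is a $1$-step shift of finite type if there is $\mathcal{F}\subseteq\mathcal{A}^{\{0,1\}}$ with $X=\{x:(T^jx)|_{[0,1]}\notin\mathcal{F}\ \forall j\in\mathbb{Z}\}$. $\mathbb{S}_{[a,b]}f(x,y)=\sum_{j=a}^bf(T^jx,S^jy)$. For integers $a\le b$: $P_{a,b}=\{(v_1,v_2)\in\mathcal{A}^2:\exists x\in X,\ x(a)=v_1,x(b)=v_2\}$; for $(v_1,v_2)\in P_{a,b}$, $y\in Y$: $H_{a,b,v_1,v_2}(y)=\min\{\mathbb{S}_{[a,b]}f(x,y):x\in X,x(a)=v_1,x(b)=v_2\}$. For $C\ge0$, $Y_{f,C}$ is the set of $y\in Y$ such that for all integers $a\le b$ there is $(v_1,v_2)\in P_{a,b}$ with $H_{a,b,v_1,v_2}(y)\ge\max\{H_{a,b,v_1,v_2}(y'):y'\in Y,\ y'|_{\mathbb{Z}\setminus[a,b]}=y|_{\mathbb{Z}\setminus[a,b]}\}-C$.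 *)

theory Defs
  imports Complex_Main
begin

definition shiftT :: "(int \<Rightarrow> 'a) \<Rightarrow> (int \<Rightarrow> 'a)" where
  "shiftT x = (\<lambda>j. x (j + 1))"

definition shift_pow :: "int \<Rightarrow> (int \<Rightarrow> 'a) \<Rightarrow> (int \<Rightarrow> 'a)" where
  "shift_pow k x = (\<lambda>j. x (j + k))"

text \<open>A 1-step shift of finite type: nonempty, shift invariant, and defined by a set of
  forbidden 2-blocks (compactness in the product of discrete topologies is automatic
  for such sets).\<close>
definition sft1 :: "(int \<Rightarrow> 'a::finite) set \<Rightarrow> bool" where
  "sft1 X \<longleftrightarrow> X \<noteq> {} \<and> shiftT ` X = X \<and>
     (\<exists>Fb :: ('a \<times> 'a) set. X = {x. \<forall>j. (x j, x (j + 1)) \<notin> Fb})"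

definition birk_sum ::
  "((int \<Rightarrow> 'a) \<Rightarrow> (int \<Rightarrow> 'a) \<Rightarrow> real) \<Rightarrow> int \<Rightarrow> int \<Rightarrow> (int \<Rightarrow> 'a) \<Rightarrow> (int \<Rightarrow> 'a) \<Rightarrow> real" where
  "birk_sum f a b x y = (\<Sum>j\<in>{a..b}. f (shift_pow j x) (shift_pow j y))"

definition Pset :: "(int \<Rightarrow> 'a) set \<Rightarrow> int \<Rightarrow> int \<Rightarrow> ('a \<times> 'a) set" where
  "Pset X a b = {(v1, v2). \<exists>x\<in>X. x a = v1 \<and> x b = v2}"

text \<open>The minimum (realised as infimum; it is attained for locally constant f).\<close>
definition Hfun ::
  "(int \<Rightarrow> 'a) set \<Rightarrow> ((int \<Rightarrow> 'a) \<Rightarrow> (int \<Rightarrow> 'a) \<Rightarrow> real) \<Rightarrow> int \<Rightarrow> int \<Rightarrow> 'a \<Rightarrow> 'a \<Rightarrow> (int \<Rightarrow> 'a) \<Rightarrow> real" where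
  "Hfun X f a b v1 v2 y = Inf {birk_sum f a b x y | x. x \<in> X \<and> x a = v1 \<and> x b = v2}"

definition Yfc ::
  "(int \<Rightarrow> 'a) set \<Rightarrow> (int \<Rightarrow> 'a) set \<Rightarrow> ((int \<Rightarrow> 'a) \<Rightarrow> (int \<Rightarrow> 'a) \<Rightarrow> real) \<Rightarrow> real \<Rightarrow> (int \<Rightarrow> 'a) set" where
  "Yfc X Y f C = {y \<in> Y. \<forall>a b. a \<le> b \<longrightarrow>
      (\<exists>(v1, v2) \<in> Pset X a b.
         Hfun X f a b v1 v2 y \<ge>
           Sup {Hfun X f a b v1 v2 y' | y'. y' \<in> Y \<and> (\<forall>i. i \<notin> {a..b} \<longrightarrow> y' i = y i)} - C)}"

end

theory Submission
  imports Defs "HOL-Library.Infinite_Set"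
begin

lemma refine_inf:
  fixes yn :: "nat \<Rightarrow> int \<Rightarrow> 'a::finite"
  assumes "infinite T"
  shows "\<exists>T'\<subseteq>T. infinite T' \<and> (\<forall>n\<in>T'. \<forall>n'\<in>T'. \<forall>j. -int K \<le> j \<and> j \<le> int K \<longrightarrow> yn n j = yn n' j)"
proof -
  define g where "g = (\<lambda>n. map (yn n) [-int K..int K])"
  have "g ` T \<subseteq> {xs. set xs \<subseteq> UNIV \<and> length xs = length [-int K..int K]}"
    by (auto simp: g_def)
  moreover have "finite {xs. set xs \<subseteq> (UNIV::'a set) \<and> length xs = length [-int K..int K]}"
    by (rule finite_lists_length_eq) simp
  ultimately have "finite (g ` T)" by (rule finite_subset)
  then obtain w where "infinite (g -` {w} \<inter> T)"
    using inf_img_fin_domE'[OF _ assms] by metis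
  moreover have "\<forall>n\<in>g -` {w} \<inter> T. \<forall>n'\<in>g -` {w} \<inter> T. \<forall>j. -int K \<le> j \<and> j \<le> int K \<longrightarrow> yn n j = yn n' j"
  proof (intro ballI allI impI)
    fix n n' j assume "n \<in> g -` {w} \<inter> T" "n' \<in> g -` {w} \<inter> T" "-int K \<le> j \<and> j \<le> int K"
    then have "map (yn n) [-int K..int K] = map (yn n') [-int K..int K]" by (auto simp: g_def)
    moreover have "j \<in> set [-int K..int K]" using \<open>-int K \<le> j \<and> j \<le> int K\<close> by simp
    ultimately show "yn n j = yn n' j" by simp
  qed
  ultimately show ?thesis by blast
qed

lemma compact_seq:
  fixes yn :: "nat \<Rightarrow> int \<Rightarrow> 'a::finite"
  shows "\<exists>y. \<forall>K::nat. \<forall>m. \<exists>n\<ge>m. \<forall>j. -int K \<le> j \<and> j \<le> int K \<longrightarrow> yn n j = y j"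
proof -
  define P where "P = (\<lambda>k Sk T'. T' \<subseteq> Sk \<and> infinite T' \<and> (\<forall>n\<in>T'. \<forall>n'\<in>T'. \<forall>j. -int k \<le> j \<and> j \<le> int k \<longrightarrow> yn n j = yn n' j))"
  define S where "S = rec_nat (UNIV::nat set) (\<lambda>k Sk. SOME T'. P k Sk T')"
  have S0: "S 0 = UNIV" by (simp add: S_def)
  have SS: "S (Suc k) = (SOME T'. P k (S k) T')" for k by (simp add: S_def)
  have inf: "infinite (S k)" for k
  proof (induction k)
    case 0 then show ?case by (simp add: S0)
  next
    case (Suc k)
    have "\<exists>T'. P k (S k) T'" using refine_inf[OF Suc, where yn=yn and K=k] unfolding P_def by blast
    then have "P k (S k) (S (Suc k))" unfolding SS by (rule someI_ex)
    then show ?case by (simp add: P_def)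
  qed
  have PS: "P k (S k) (S (Suc k))" for k
  proof -
    have "\<exists>T'. P k (S k) T'" using refine_inf[OF inf[of k], where yn=yn and K=k] unfolding P_def by blast
    then show ?thesis unfolding SS by (rule someI_ex)
  qed
  have mono: "S K \<subseteq> S k" if "k \<le> K" for k K
    by (rule lift_Suc_antimono_le[of S, OF _ that]) (use PS in \<open>auto simp: P_def\<close>)
  define y where "y = (\<lambda>j. yn (LEAST n. n \<in> S (Suc (nat \<bar>j\<bar>))) j)"
  have "\<forall>m. \<exists>n\<ge>m. \<forall>j. -int K \<le> j \<and> j \<le> int K \<longrightarrow> yn n j = y j" for K
  proof
    fix m
    obtain n where n: "n \<ge> m" "n \<in> S (Suc K)"
      using inf[of "Suc K"] unfolding infinite_nat_iff_unbounded_le by blast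
    have "yn n j = y j" if j: "-int K \<le> j \<and> j \<le> int K" for j
    proof -
      define k where "k = nat \<bar>j\<bar>"
      have "k \<le> K" using j unfolding k_def by linarith
      then have sub: "S (Suc K) \<subseteq> S (Suc k)" by (intro mono) simp
      have ne: "S (Suc k) \<noteq> {}" using inf[of "Suc k"] by auto
      then have l: "(LEAST n. n \<in> S (Suc k)) \<in> S (Suc k)" by (metis LeastI ex_in_conv)
      have "-int k \<le> j \<and> j \<le> int k" unfolding k_def by linarith
      then have "yn n j = yn (LEAST n. n \<in> S (Suc k)) j"
        using PS[of k] l sub n(2) unfolding P_def by blast
      then show ?thesis by (simp add: y_def k_def)
    qed
    then show "\<exists>n\<ge>m. \<forall>j. -int K \<le> j \<and> j \<le> int K \<longrightarrow> yn n j = y j" using n by blast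
  qed
  then show ?thesis by blast
qed

definition condc :: "(int \<Rightarrow> 'a) set \<Rightarrow> (int \<Rightarrow> 'a) set \<Rightarrow> ('a \<Rightarrow> 'a \<Rightarrow> real) \<Rightarrow> real \<Rightarrow> (int \<Rightarrow> 'a) \<Rightarrow> int \<Rightarrow> int \<Rightarrow> bool" where
  "condc X Y F c y a b \<longleftrightarrow> (\<exists>(v1, v2) \<in> Pset X a b.
         Hfun X (\<lambda>x y. F (x 0) (y 0)) a b v1 v2 y \<ge>
           Sup {Hfun X (\<lambda>x y. F (x 0) (y 0)) a b v1 v2 y' | y'. y' \<in> Y \<and> (\<forall>i. i \<notin> {a..b} \<longrightarrow> y' i = y i)} - c)"

lemma Yfc_alt: "Yfc X Y (\<lambda>x y. F (x 0) (y 0)) c = {y \<in> Y. \<forall>a b. a \<le> b \<longrightarrow> condc X Y F c y a b}"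
  unfolding Yfc_def condc_def by simp

lemma condc_mono:
  assumes "c \<le> c'" "condc X Y F c y a b"
  shows "condc X Y F c' y a b"
proof -
  let ?S = "\<lambda>v1 v2. Sup {Hfun X (\<lambda>x y. F (x 0) (y 0)) a b v1 v2 y' | y'. y' \<in> Y \<and> (\<forall>i. i \<notin> {a..b} \<longrightarrow> y' i = y i)}"
  obtain v1 v2 where v: "(v1, v2) \<in> Pset X a b" "Hfun X (\<lambda>x y. F (x 0) (y 0)) a b v1 v2 y \<ge> ?S v1 v2 - c"
    using assms(2) unfolding condc_def by blast
  then have "Hfun X (\<lambda>x y. F (x 0) (y 0)) a b v1 v2 y \<ge> ?S v1 v2 - c'" using assms(1) by linarith
  then show ?thesis unfolding condc_def using v(1) by blast
qed

lemma Yfc_mono: "c \<le> c' \<Longrightarrow> Yfc X Y (\<lambda>x y. F (x 0) (y 0)) c \<subseteq> Yfc X Y (\<lambda>x y. F (x 0) (y 0)) c'"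
  unfolding Yfc_alt using condc_mono by blast

lemma birk_F: "birk_sum (\<lambda>x y. F (x 0) (y 0)) a b x y = (\<Sum>j\<in>{a..b}. F (x j) (y j))"
  by (simp add: birk_sum_def shift_pow_def)

lemma H_local:
  assumes "\<forall>j\<in>{a..b}. y j = z j"
  shows "Hfun X (\<lambda>x y. F (x 0) (y 0)) a b v1 v2 y = Hfun X (\<lambda>x y. F (x 0) (y 0)) a b v1 v2 z"
proof -
  have "\<And>x. (\<Sum>j\<in>{a..b}. F (x j) (y j)) = (\<Sum>j\<in>{a..b}. F (x j) (z j))"
    by (rule sum.cong) (use assms in auto)
  then show ?thesis unfolding Hfun_def birk_F by simp
qed

lemma Sup_set_local:
  assumes Y: "Y = {x. \<forall>j. (x j, x (j + 1)) \<notin> Fb}" and "y \<in> Y" "z \<in> Y"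
    and agree: "\<forall>j\<in>{a-1..b+1}. y j = z j"
  shows "{Hfun X (\<lambda>x y. F (x 0) (y 0)) a b v1 v2 y' | y'. y' \<in> Y \<and> (\<forall>i. i \<notin> {a..b} \<longrightarrow> y' i = y i)}
      \<subseteq> {Hfun X (\<lambda>x y. F (x 0) (y 0)) a b v1 v2 y' | y'. y' \<in> Y \<and> (\<forall>i. i \<notin> {a..b} \<longrightarrow> y' i = z i)}"
proof
  fix t assume "t \<in> {Hfun X (\<lambda>x y. F (x 0) (y 0)) a b v1 v2 y' | y'. y' \<in> Y \<and> (\<forall>i. i \<notin> {a..b} \<longrightarrow> y' i = y i)}"
  then obtain y' where y': "t = Hfun X (\<lambda>x y. F (x 0) (y 0)) a b v1 v2 y'" "y' \<in> Y" "\<forall>i. i \<notin> {a..b} \<longrightarrow> y' i = y i"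
    by blast
  define z' where "z' = (\<lambda>i. if i \<in> {a..b} then y' i else z i)"
  have z'1: "z' i = y' i" if "a - 1 \<le> i" "i \<le> b + 1" for i
  proof (cases "i \<in> {a..b}")
    case True then show ?thesis by (simp add: z'_def)
  next
    case False
    then have "z' i = z i" "y' i = y i" using y'(3) by (auto simp: z'_def)
    moreover have "y i = z i" using agree that by auto
    ultimately show ?thesis by simp
  qed
  have z'2: "z' i = z i" if "i \<notin> {a..b}" for i using that unfolding z'_def by auto
  have "z' \<in> Y"
    unfolding Y
  proof (intro CollectI allI)
    fix j
    show "(z' j, z' (j + 1)) \<notin> Fb"
    proof (cases "a - 1 \<le> j \<and> j + 1 \<le> b + 1")
      case True
      then have "(z' j, z' (j + 1)) = (y' j, y' (j + 1))" using z'1 by simp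
      then show ?thesis using y'(2) Y by auto
    next
      case False
      then have "(z' j, z' (j + 1)) = (z j, z (j + 1))" using z'2 by auto
      then show ?thesis using \<open>z \<in> Y\<close> Y by auto
    qed
  qed
  moreover have "t = Hfun X (\<lambda>x y. F (x 0) (y 0)) a b v1 v2 z'"
    unfolding y'(1) by (rule H_local) (simp add: z'_def)
  moreover have "\<forall>i. i \<notin> {a..b} \<longrightarrow> z' i = z i" using z'2 by blast
  ultimately show "t \<in> {Hfun X (\<lambda>x y. F (x 0) (y 0)) a b v1 v2 y' | y'. y' \<in> Y \<and> (\<forall>i. i \<notin> {a..b} \<longrightarrow> y' i = z i)}"
    by (intro CollectI exI[of _ z'] conjI)
qed

lemma condc_local:
  assumes Y: "Y = {x. \<forall>j. (x j, x (j + 1)) \<notin> Fb}" and "y \<in> Y" "z \<in> Y"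
    and agree: "\<forall>j\<in>{a-1..b+1}. y j = z j"
    and "condc X Y F c y a b"
  shows "condc X Y F c z a b"
proof -
  have agree': "\<forall>j\<in>{a-1..b+1}. z j = y j" using agree by auto
  have eqs: "{Hfun X (\<lambda>x y. F (x 0) (y 0)) a b v1 v2 y' | y'. y' \<in> Y \<and> (\<forall>i. i \<notin> {a..b} \<longrightarrow> y' i = y i)}
      = {Hfun X (\<lambda>x y. F (x 0) (y 0)) a b v1 v2 y' | y'. y' \<in> Y \<and> (\<forall>i. i \<notin> {a..b} \<longrightarrow> y' i = z i)}" for v1 v2
    using Sup_set_local[OF Y assms(2,3) agree] Sup_set_local[OF Y assms(3,2) agree'] by (rule antisym)
  have eqH: "Hfun X (\<lambda>x y. F (x 0) (y 0)) a b v1 v2 y = Hfun X (\<lambda>x y. F (x 0) (y 0)) a b v1 v2 z" for v1 v2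
    by (rule H_local) (use agree in auto)
  show ?thesis using assms(5) unfolding condc_def eqs eqH .
qed

theorem lemma3p7:
  fixes X Y :: "(int \<Rightarrow> 'a::finite) set"
    and F :: "'a \<Rightarrow> 'a \<Rightarrow> real"
    and Cs :: "nat \<Rightarrow> real" and C :: real
  assumes "sft1 X" and "sft1 Y"
    and "\<And>n. Cs (Suc n) \<le> Cs n"
    and "\<And>n. 0 \<le> Cs n"
    and "Cs \<longlonglongrightarrow> C"
  shows "Yfc X Y (\<lambda>x y. F (x 0) (y 0)) C = (\<Inter>n. Yfc X Y (\<lambda>x y. F (x 0) (y 0)) (Cs n))
    \<and> ((\<forall>n. Yfc X Y (\<lambda>x y. F (x 0) (y 0)) (Cs n) \<noteq> {}) \<longrightarrow> Yfc X Y (\<lambda>x y. F (x 0) (y 0)) C \<noteq> {})"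
proof -
  have dec: "decseq Cs" using assms(3) by (simp add: decseq_SucI)
  have CleCs: "C \<le> Cs n" for n by (rule decseq_ge[OF dec assms(5)])
  have part1: "Yfc X Y (\<lambda>x y. F (x 0) (y 0)) C = (\<Inter>n. Yfc X Y (\<lambda>x y. F (x 0) (y 0)) (Cs n))"
  proof
    show "Yfc X Y (\<lambda>x y. F (x 0) (y 0)) C \<subseteq> (\<Inter>n. Yfc X Y (\<lambda>x y. F (x 0) (y 0)) (Cs n))"
      using Yfc_mono[OF CleCs] by blast
  next
    show "(\<Inter>n. Yfc X Y (\<lambda>x y. F (x 0) (y 0)) (Cs n)) \<subseteq> Yfc X Y (\<lambda>x y. F (x 0) (y 0)) C"
    proof
      fix y assume yin: "y \<in> (\<Inter>n. Yfc X Y (\<lambda>x y. F (x 0) (y 0)) (Cs n))"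
      then have "y \<in> Y" unfolding Yfc_alt by blast
      moreover have "condc X Y F C y a b" if "a \<le> b" for a b
      proof (rule ccontr)
        assume nc: "\<not> condc X Y F C y a b"
        define d where "d = (\<lambda>(v1, v2). Sup {Hfun X (\<lambda>x y. F (x 0) (y 0)) a b v1 v2 y' | y'. y' \<in> Y \<and> (\<forall>i. i \<notin> {a..b} \<longrightarrow> y' i = y i)}
            - Hfun X (\<lambda>x y. F (x 0) (y 0)) a b v1 v2 y)"
        have cd: "condc X Y F c y a b \<longleftrightarrow> (\<exists>p\<in>Pset X a b. d p \<le> c)" for c
        proof
          assume "condc X Y F c y a b"
          then obtain v1 v2 where v: "(v1, v2) \<in> Pset X a b" "Hfun X (\<lambda>x y. F (x 0) (y 0)) a b v1 v2 y \<ge>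
           Sup {Hfun X (\<lambda>x y. F (x 0) (y 0)) a b v1 v2 y' | y'. y' \<in> Y \<and> (\<forall>i. i \<notin> {a..b} \<longrightarrow> y' i = y i)} - c"
            unfolding condc_def by blast
          then have "d (v1, v2) \<le> c" unfolding d_def by simp
          then show "\<exists>p\<in>Pset X a b. d p \<le> c" using v(1) by blast
        next
          assume "\<exists>p\<in>Pset X a b. d p \<le> c"
          then obtain v1 v2 where v: "(v1, v2) \<in> Pset X a b" "d (v1, v2) \<le> c" by auto
          then have "Hfun X (\<lambda>x y. F (x 0) (y 0)) a b v1 v2 y \<ge>
           Sup {Hfun X (\<lambda>x y. F (x 0) (y 0)) a b v1 v2 y' | y'. y' \<in> Y \<and> (\<forall>i. i \<notin> {a..b} \<longrightarrow> y' i = y i)} - c"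
            unfolding d_def by simp
          then show "condc X Y F c y a b" unfolding condc_def using v(1) by blast
        qed
        have fin: "finite (Pset X a b)" by simp
        have "\<forall>p\<in>Pset X a b. eventually (\<lambda>n. Cs n < d p) sequentially"
        proof
          fix p assume "p \<in> Pset X a b"
          then have "C < d p" using nc unfolding cd by force
          then show "eventually (\<lambda>n. Cs n < d p) sequentially" by (rule order_tendstoD(2)[OF assms(5)])
        qed
        then have "eventually (\<lambda>n. \<forall>p\<in>Pset X a b. Cs n < d p) sequentially"
          by (rule eventually_ball_finite[OF fin])
        then obtain N where N: "\<And>n. n \<ge> N \<Longrightarrow> \<forall>p\<in>Pset X a b. Cs n < d p"
          unfolding eventually_sequentially by blast
        have "condc X Y F (Cs N) y a b" using yin that unfolding Yfc_alt by blast
        then obtain p where "p \<in> Pset X a b" "d p \<le> Cs N" unfolding cd by blast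
        then show False using N[of N] by fastforce
      qed
      ultimately show "y \<in> Yfc X Y (\<lambda>x y. F (x 0) (y 0)) C" unfolding Yfc_alt by blast
    qed
  qed
  moreover have "Yfc X Y (\<lambda>x y. F (x 0) (y 0)) C \<noteq> {}"
    if ne: "\<forall>n. Yfc X Y (\<lambda>x y. F (x 0) (y 0)) (Cs n) \<noteq> {}"
  proof -
    obtain Fb where Y: "Y = {x. \<forall>j. (x j, x (j + 1)) \<notin> Fb}" using assms(2)[unfolded sft1_def, THEN conjunct2, THEN conjunct2] by (elim exE)
    have ex: "\<forall>n. \<exists>y. y \<in> Yfc X Y (\<lambda>x y. F (x 0) (y 0)) (Cs n)" using ne by blast
    obtain yn where yn': "\<forall>n. yn n \<in> Yfc X Y (\<lambda>x y. F (x 0) (y 0)) (Cs n)" using choice[OF ex] by blast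
    have yn: "yn n \<in> Yfc X Y (\<lambda>x y. F (x 0) (y 0)) (Cs n)" for n using yn' by blast
    have ynY: "yn n \<in> Y" for n using yn[of n] unfolding Yfc_alt by blast
    obtain y where y0: "\<forall>K m. \<exists>n\<ge>m. \<forall>j. -int K \<le> j \<and> j \<le> int K \<longrightarrow> yn n j = y j"
      using compact_seq[of yn] by (elim exE)
    have y: "\<exists>n\<ge>m. \<forall>j. -int K \<le> j \<and> j \<le> int K \<longrightarrow> yn n j = y j" for K m
      by (rule y0[rule_format])
    have yY: "y \<in> Y"
      unfolding Y
    proof (intro CollectI allI)
      fix j
      obtain n where n: "\<forall>i. -int (nat \<bar>j\<bar> + 1) \<le> i \<and> i \<le> int (nat \<bar>j\<bar> + 1) \<longrightarrow> yn n i = y i"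
        using y[where K="nat \<bar>j\<bar> + 1" and m=0] by blast
      have b1: "-int (nat \<bar>j\<bar> + 1) \<le> j \<and> j \<le> int (nat \<bar>j\<bar> + 1)" by linarith
      have b2: "-int (nat \<bar>j\<bar> + 1) \<le> j + 1 \<and> j + 1 \<le> int (nat \<bar>j\<bar> + 1)" by linarith
      have "(y j, y (j + 1)) = (yn n j, yn n (j + 1))" using n b1 b2 by simp
      then show "(y j, y (j + 1)) \<notin> Fb" using ynY[of n] Y by auto
    qed
    have "y \<in> Yfc X Y (\<lambda>x y. F (x 0) (y 0)) (Cs m)" for m
      unfolding Yfc_alt
    proof (intro CollectI conjI allI impI yY)
      fix a b :: int assume ab: "a \<le> b"
      define K where "K = max (nat \<bar>a - 1\<bar>) (nat \<bar>b + 1\<bar>)"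
      obtain n where n: "n \<ge> m" "\<forall>j. -int K \<le> j \<and> j \<le> int K \<longrightarrow> yn n j = y j"
        using y[where K=K and m=m] by blast
      have agree: "\<forall>j\<in>{a-1..b+1}. yn n j = y j"
      proof
        fix j assume "j \<in> {a-1..b+1}"
        then have "-int K \<le> j \<and> j \<le> int K" unfolding K_def by auto
        then show "yn n j = y j" using n(2) by blast
      qed
      have "Cs n \<le> Cs m" using dec n(1) by (simp add: decseq_def)
      then have "yn n \<in> Yfc X Y (\<lambda>x y. F (x 0) (y 0)) (Cs m)" using yn[of n] Yfc_mono[of "Cs n" "Cs m" X Y F] by blast
      then have "condc X Y F (Cs m) (yn n) a b" using ab unfolding Yfc_alt by blast
      then show "condc X Y F (Cs m) y a b" by (rule condc_local[OF Y ynY yY agree])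
    qed
    then show ?thesis using part1 by blast
  qed
  ultimately show ?thesis by blast
qed

end
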